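(* Let $n \geq 2$. The set of strongly doubly reversible pairs in $\mathrm{SU}(n,1)$ has Haar measure zero in $\mathrm{SU}(n,1)\times \mathrm{SU}(n,1)$.
   Context: $\mathrm{SU}(n,1)$ is the group of determinant-one complex $(n+1)\times(n+1)$ matrices preserving a Hermitian form of signature $(n,1)$. For a group $G$, a pair $(g_1,g_2)\in G\times G$ is strongly doubly reversible if there is $g\in G$ with $g^2=1$ such that $g g_1 g^{-1}=g_1^{-1}$ and $g g_2 g^{-1}=g_2^{-1}$. *)

theory Defs
  imports "HOL-Analysis.Analysis"
begin

text \<open>Complex (n+1)x(n+1) matrices are indexed by the type 'm option, where
  CARD('m) = n; the index None carries the negative direction of the form.\<close>

definition conj_transpose :: "complex^'k::finite^'k \<Rightarrow> complex^'k^'k" where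
  "conj_transpose A = (\<chi> i j. cnj (A $ j $ i))"

definition form_J :: "complex^('m::finite option)^('m::finite option)" where
  "form_J = (\<chi> i j. if i = j then (if i = None then -1 else 1) else 0)"

definition SU_n1 :: "(complex^('m::finite option)^('m::finite option)) set" where
  "SU_n1 = {A. conj_transpose A ** form_J ** A = form_J \<and> det A = 1}"

definition strongly_doubly_reversible ::
  "('a::semiring_1^'k::finite^'k) set \<Rightarrow> 'a^'k^'k \<Rightarrow> 'a^'k^'k \<Rightarrow> bool" where
  "strongly_doubly_reversible G g1 g2 \<longleftrightarrow>
     (\<exists>g\<in>G. g ** g = mat 1 \<and>
        g ** g1 ** matrix_inv g = matrix_inv g1 \<and>
        g ** g2 ** matrix_inv g = matrix_inv g2)"

text \<open>A (left) Haar measure of a locally compact group H (a subset of a Euclidean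
  space, with multiplication mul), realised as a Borel measure on the ambient space
  concentrated on H: nonzero, finite on compact sets, left-invariant.\<close>
definition haar_measure ::
  "('a::euclidean_space \<Rightarrow> 'a \<Rightarrow> 'a) \<Rightarrow> 'a set \<Rightarrow> 'a measure \<Rightarrow> bool" where
  "haar_measure mul H \<mu> \<longleftrightarrow>
     sets \<mu> = sets borel \<and>
     emeasure \<mu> (UNIV - H) = 0 \<and>
     emeasure \<mu> H \<noteq> 0 \<and>
     (\<forall>K. compact K \<longrightarrow> emeasure \<mu> K < \<infinity>) \<and>
     (\<forall>g\<in>H. \<forall>A\<in>sets borel. A \<subseteq> H \<longrightarrow>
        emeasure \<mu> (mul g ` A) = emeasure \<mu> A)"

definition haar_null :: "'a measure \<Rightarrow> 'a set \<Rightarrow> bool" where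
  "haar_null \<mu> S \<longleftrightarrow> (\<exists>N\<in>sets \<mu>. S \<subseteq> N \<and> emeasure \<mu> N = 0)"

definition pair_mult :: "('a::semiring_1^'k::finite^'k) \<times> ('a^'k^'k) \<Rightarrow> ('a^'k^'k) \<times> ('a^'k^'k)
    \<Rightarrow> ('a^'k^'k) \<times> ('a^'k^'k)" where
  "pair_mult p q = (fst p ** fst q, snd p ** snd q)"

end

theory Submission
  imports Defs "HOL-Computational_Algebra.Polynomial"
begin


definition dd :: "'m \<Rightarrow> 'm \<Rightarrow> complex \<Rightarrow> 'm option \<Rightarrow> complex" where
  "dd s1 s2 w i = (if i = None then cnj w ^ 2 else if i = Some s1 \<or> i = Some s2 then w else 1)"

lemma matrix_inv_eq:
  fixes A B :: "'a::field^'n^'n"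
  assumes "A ** B = mat 1"
  shows "matrix_inv A = B"
proof -
  have BA: "B ** A = mat 1" using assms matrix_left_right_inverse by blast
  have "A ** matrix_inv A = mat 1 \<and> matrix_inv A ** A = mat 1"
    unfolding matrix_inv_def by (rule someI[of _ B]) (use assms BA in auto)
  then have "matrix_inv A ** A ** B = B" by simp
  moreover have "matrix_inv A ** A ** B = matrix_inv A" by (simp add: assms matrix_mul_assoc[symmetric])
  ultimately show ?thesis by simp
qed

lemma J_J: "(form_J :: complex^('m::finite option)^('m option)) ** form_J = mat 1"
proof -
  define s :: "'m option \<Rightarrow> complex" where "s i = (if i = None then -1 else 1)" for i
  have J: "(form_J :: complex^('m::finite option)^('m option)) = (\<chi> i j. if i = j then s i else 0)"
    by (simp add: form_J_def s_def vec_eq_iff)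
  have "(\<Sum>k\<in>UNIV. (if i = k then s i else 0) * (if k = j then s k else 0)) = (if i = j then 1 else 0)" for i j
  proof -
    have "(\<Sum>k\<in>UNIV. (if i = k then s i else 0) * (if k = j then s k else 0)) = 
          (\<Sum>k\<in>UNIV. if k = i then (s i * (if i = j then s i else 0)) else 0)"
      by (rule sum.cong) auto
    also have "\<dots> = (if i = j then 1 else 0)" by (simp add: s_def)
    finally show ?thesis .
  qed
  then show ?thesis by (simp add: J matrix_matrix_mult_def mat_def vec_eq_iff)
qed

lemma trace_ct: "trace (conj_transpose A) = cnj (trace A)"
  by (simp add: trace_def conj_transpose_def)

lemma SU_inv:
  assumes "A \<in> SU_n1"
  shows "matrix_inv A = form_J ** conj_transpose A ** form_J"
proof -
  have "conj_transpose A ** form_J ** A = form_J" using assms by (simp add: SU_n1_def)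
  then have "(form_J ** conj_transpose A ** form_J) ** A = mat 1"
    by (metis J_J matrix_mul_assoc)
  then show ?thesis using matrix_inv_eq matrix_left_right_inverse by blast
qed

lemma rev_trace:
  assumes "A \<in> SU_n1" "strongly_doubly_reversible SU_n1 A B"
  shows "Im (trace A) = 0"
proof -
  obtain g where g: "g \<in> SU_n1" "g ** g = mat 1" "g ** A ** matrix_inv g = matrix_inv A"
    using assms(2) unfolding strongly_doubly_reversible_def by blast
  have "matrix_inv g = g" using g(2) by (rule matrix_inv_eq)
  then have "trace (matrix_inv A) = trace (g ** A ** g)" using g(3) by simp
  also have "\<dots> = trace (A ** g ** g)" by (metis trace_mul_sym matrix_mul_assoc)
  also have "\<dots> = trace A" using g(2) by (simp add: matrix_mul_assoc[symmetric])
  finally have 1: "trace (matrix_inv A) = trace A" .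
  have "trace (matrix_inv A) = trace (conj_transpose A ** form_J ** form_J)"
    using SU_inv[OF assms(1)] by (metis trace_mul_sym matrix_mul_assoc)
  also have "\<dots> = cnj (trace A)" by (simp add: matrix_mul_assoc[symmetric] J_J trace_ct)
  finally have c: "cnj (trace A) = trace A" using 1 by simp
  have "Im (cnj (trace A)) = Im (trace A)" using c by simp
  then show ?thesis by simp
qed

lemma closed_SU: "closed (SU_n1 :: (complex^('m::finite option)^('m option)) set)"
proof -
  have eq: "SU_n1 = {A::complex^('m option)^('m option). conj_transpose A ** form_J ** A = form_J} \<inter> {A. det A = 1}"
    by (auto simp: SU_n1_def)
  have "closed {A::complex^('m option)^('m option). conj_transpose A ** form_J ** A = form_J}"
    by (intro closed_Collect_eq) (auto simp: conj_transpose_def matrix_matrix_mult_def intro!: continuous_intros)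
  moreover have "closed {A::complex^('m option)^('m option). det A = 1}"
    by (intro closed_Collect_eq) (auto simp: det_def intro!: continuous_intros)
  ultimately have "closed ({A::complex^('m option)^('m option). conj_transpose A ** form_J ** A = form_J} \<inter> {A. det A = 1})"
    by (rule closed_Int)
  then show ?thesis by (simp only: eq)
qed

lemma corner:
  fixes A :: "complex^('m::finite option)^('m option)"
  assumes "A \<in> SU_n1"
  shows "A $ None $ None \<noteq> 0"
proof
  assume A0: "A $ None $ None = 0"
  define s :: "'m option \<Rightarrow> complex" where "s i = (if i = None then -1 else 1)" for i
  have J: "(form_J :: complex^('m::finite option)^('m option)) = (\<chi> i j. if i = j then s i else 0)"
    by (simp add: form_J_def s_def vec_eq_iff)
  have inner: "(\<Sum>l\<in>UNIV. cnj (A $ l $ None) * (if l = k then s l else 0)) = cnj (A $ k $ None) * s k" for k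
  proof -
    have "(\<Sum>l\<in>UNIV. cnj (A $ l $ None) * (if l = k then s l else 0)) = (\<Sum>l\<in>UNIV. if l = k then cnj (A $ k $ None) * s k else 0)"
      by (rule sum.cong) auto
    then show ?thesis by simp
  qed
  have "(conj_transpose A ** form_J ** A) $ None $ None = (\<Sum>k\<in>UNIV. cnj (A $ k $ None) * s k * A $ k $ None)"
    by (simp add: J matrix_matrix_mult_def conj_transpose_def inner)
  then have m1: "-1 = (\<Sum>k\<in>UNIV. cnj (A $ k $ None) * s k * A $ k $ None)"
    using assms by (simp add: SU_n1_def form_J_def)
  have "-1 = Re (\<Sum>k\<in>UNIV. cnj (A $ k $ None) * s k * A $ k $ None)" using arg_cong[where f=Re, OF m1] by simp
  also have "\<dots> = (\<Sum>k\<in>UNIV. Re (cnj (A $ k $ None) * s k * A $ k $ None))" by (simp add: Re_sum)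
  also have "\<dots> \<ge> 0"
  proof (rule sum_nonneg)
    fix k :: "'m option"
    show "0 \<le> Re (cnj (A $ k $ None) * s k * A $ k $ None)"
    proof (cases "k = None")
      case True then show ?thesis using A0 by simp
    next
      case False
      then have "s k = 1" by (simp add: s_def)
      then have "cnj (A $ k $ None) * s k * A $ k $ None = A $ k $ None * cnj (A $ k $ None)" by simp
      also have "\<dots> = complex_of_real ((Re (A $ k $ None))\<^sup>2 + (Im (A $ k $ None))\<^sup>2)"
        by (rule complex_mult_cnj)
      finally show ?thesis by simp
    qed
  qed
  finally show False by simp
qed


lemma null_by_translates:
  fixes M :: "'a measure"
  assumes A: "\<And>k. A k \<in> sets M" and AC: "\<And>k. A k \<subseteq> C" and C: "C \<in> sets M"
    and Cfin: "emeasure M C < \<infinity>" and eq: "\<And>k::nat. emeasure M (A k) = e"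
    and fin: "\<And>x. finite {k. x \<in> A k}" and cardb: "\<And>x. card {k. x \<in> A k} \<le> m"
  shows "e = 0"
proof -
  have bound: "of_nat N * e \<le> of_nat m * emeasure M C" for N
  proof -
    have "of_nat N * e = (\<Sum>k<N. emeasure M (A k))" by (simp add: eq)
    also have "\<dots> = (\<Sum>k<N. \<integral>\<^sup>+ x. indicator (A k) x \<partial>M)" using A by simp
    also have "\<dots> = (\<integral>\<^sup>+ x. (\<Sum>k<N. indicator (A k) x) \<partial>M)"
      by (rule nn_integral_sum[symmetric]) (use A in auto)
    also have "\<dots> \<le> (\<integral>\<^sup>+ x. of_nat m * indicator C x \<partial>M)"
    proof (rule nn_integral_mono)
      fix x
      show "(\<Sum>k<N. indicator (A k) x) \<le> (of_nat m * indicator C x :: ennreal)"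
      proof (cases "x \<in> C")
        case False
        then have "\<forall>k. x \<notin> A k" using AC by blast
        then show ?thesis by simp
      next
        case True
        have "(\<Sum>k<N. indicator (A k) x :: ennreal) = of_nat (card ({..<N} \<inter> {k. x \<in> A k}))"
          by (simp add: indicator_def sum.If_cases)
        also have "card ({..<N} \<inter> {k. x \<in> A k}) \<le> card {k. x \<in> A k}"
          by (rule card_mono[OF fin]) auto
        then have "card ({..<N} \<inter> {k. x \<in> A k}) \<le> m" using cardb[of x] by linarith
        then have "(of_nat (card ({..<N} \<inter> {k. x \<in> A k})) :: ennreal) \<le> of_nat m" by simp
        finally show ?thesis using True by simp
      qed
    qed
    also have "\<dots> = of_nat m * emeasure M C" using C by (simp add: nn_integral_cmult_indicator)
    finally show ?thesis .
  qed
  obtain r where r: "of_nat m * emeasure M C = ennreal r" "r \<ge> 0"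
    using Cfin by (metis ennreal_cases ennreal_mult_eq_top_iff ennreal_of_nat_neq_top infinity_ennreal_def less_irrefl)
  have "e \<le> ennreal r" using bound[of 1] r by simp
  then obtain a where a: "e = ennreal a" "a \<ge> 0"
    by (metis ennreal_cases ennreal_less_top infinity_ennreal_def leD)
  have "real N * a \<le> r" for N
  proof -
    have "ennreal (real N * a) \<le> ennreal r" using bound[of N] r a
      by (simp add: ennreal_mult ennreal_of_nat_eq_real_of_nat)
    then show ?thesis using r by (simp add: ennreal_le_iff)
  qed
  then have "a \<le> 0"
  proof -
    obtain N :: nat where "r < real N * a" if "a > 0"
      using reals_Archimedean3 by blast
    then show ?thesis using \<open>\<And>N. real N * a \<le> r\<close> by (meson leD not_le)
  qed
  then show ?thesis using a by simp
qed


definition dg :: "('k::finite \<Rightarrow> complex) \<Rightarrow> complex^'k^'k" where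
  "dg f = (\<chi> i j. if i = j then f i else 0)"

lemma dg_mult_left: "(dg f ** Y) $ i $ j = f i * Y $ i $ j"
proof -
  have "(\<Sum>k\<in>UNIV. (if i = k then f i else 0) * Y $ k $ j) = (\<Sum>k\<in>UNIV. if k = i then f i * Y $ i $ j else 0)"
    by (intro sum.cong refl) auto
  then show ?thesis by (simp add: dg_def matrix_matrix_mult_def)
qed

lemma dg_dg: "dg f ** dg g = dg (\<lambda>i. f i * g i)"
  by (simp add: vec_eq_iff dg_mult_left) (simp add: dg_def)

lemma ct_dg: "conj_transpose (dg f) = dg (\<lambda>i. cnj (f i))"
  by (simp add: vec_eq_iff conj_transpose_def dg_def)

lemma J_dg: "(form_J :: complex^('m::finite option)^('m option)) = dg (\<lambda>i. if i = None then -1 else 1)"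
  by (simp add: vec_eq_iff form_J_def dg_def)

lemma dg_SU:
  fixes f :: "'m::finite option \<Rightarrow> complex"
  assumes "\<And>i. cmod (f i) = 1" "prod f UNIV = 1"
  shows "dg f \<in> SU_n1"
proof -
  define s :: "'m option \<Rightarrow> complex" where "s i = (if i = None then -1 else 1)" for i
  have u: "cnj (f i) * f i = 1" for i using assms(1)[of i]
    by (metis complex_norm_square mult.commute of_real_1 power_one)
  have J: "(form_J :: complex^('m::finite option)^('m option)) = dg s"
    unfolding s_def by (rule J_dg)
  have "conj_transpose (dg f) ** form_J ** dg f = dg (\<lambda>i. cnj (f i) * s i * f i)"
    by (simp only: J ct_dg dg_dg)
  also have "(\<lambda>i. cnj (f i) * s i * f i) = s"
  proof
    fix i
    have "cnj (f i) * s i * f i = s i * (cnj (f i) * f i)" by (simp only: mult_ac)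
    then show "cnj (f i) * s i * f i = s i" by (simp only: u mult_1_right)
  qed
  finally have 1: "conj_transpose (dg f) ** form_J ** dg f = form_J" by (simp only: J)
  have "det (dg f) = prod (\<lambda>i. dg f $ i $ i) UNIV"
    by (rule det_diagonal) (simp add: dg_def)
  also have "\<dots> = 1" using assms(2) by (simp add: dg_def)
  finally show ?thesis using 1 by (simp add: SU_n1_def)
qed

lemma one_SU: "(mat 1 :: complex^('m::finite option)^('m option)) \<in> SU_n1"
proof -
  have "(mat 1 :: complex^('m::finite option)^('m option)) = dg (\<lambda>_. 1)"
    by (simp add: vec_eq_iff mat_def dg_def)
  then show ?thesis using dg_SU[of "\<lambda>_. 1"] by simp
qed

lemma norm_dg:
  assumes "\<And>i. cmod (f i) = 1"
  shows "norm (dg f ** Y) = norm Y"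
proof -
  have "norm ((dg f ** Y) $ i) = norm (Y $ i)" for i
    by (simp add: norm_vec_def dg_mult_left norm_mult assms)
  then show ?thesis by (simp add: norm_vec_def)
qed

lemma prod_d:
  fixes s1 s2 :: "'m::finite"
  assumes "s1 \<noteq> s2" "cmod w = 1"
  shows "prod (dd s1 s2 w) UNIV = 1"
proof -
  have e: "dd s1 s2 w = (\<lambda>i. if i = None then cnj w ^ 2 else if i = Some s1 \<or> i = Some s2 then w else 1)"
    by (rule ext) (simp add: dd_def)
  have "(\<Prod>i\<in>UNIV. (if i = None then cnj w ^ 2 else if i = Some s1 \<or> i = Some s2 then w else 1))
      = (\<Prod>i\<in>{None, Some s1, Some s2}. (if i = None then cnj w ^ 2 else if i = Some s1 \<or> i = Some s2 then w else 1))"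
    by (rule prod.mono_neutral_right) auto
  also have "\<dots> = cnj w ^ 2 * (w * w)" using assms(1) by simp
  also have "\<dots> = (cnj w * w) ^ 2" by (simp only: power2_eq_square mult_ac)
  also have "cnj w * w = 1" using assms(2) by (metis complex_norm_square mult.commute of_real_1 power_one)
  finally have "(\<Prod>i\<in>UNIV. (if i = None then cnj w ^ 2 else if i = Some s1 \<or> i = Some s2 then w else 1)) = 1" by simp
  then show ?thesis by (simp add: e)
qed


lemma cont_mm: "continuous_on S (\<lambda>X. (A::complex^'k::finite^'k) ** X)"
  unfolding matrix_matrix_mult_def
  by (intro continuous_on_vec_lambda continuous_on_sum continuous_on_mult continuous_on_const continuous_on_component continuous_on_id)

lemma cont_pm: "continuous_on S (pair_mult (g :: (complex^'k::finite^'k) \<times> (complex^'k^'k)))"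
proof -
  have "pair_mult g = (\<lambda>p. (fst g ** fst p, snd g ** snd p))" by (simp add: pair_mult_def[abs_def])
  moreover have "continuous_on S (\<lambda>p. (fst g ** fst p, snd g ** snd p))"
    by (intro continuous_on_Pair continuous_on_compose2[OF cont_mm] continuous_on_fst continuous_on_snd continuous_on_id) auto
  ultimately show ?thesis by simp
qed

lemma root_poly:
  fixes x :: "complex^('m::finite option)^('m option)" and s1 s2 :: 'm
  assumes x0: "x$None$None \<noteq> 0"
  shows "\<exists>P::complex poly. P \<noteq> 0 \<and> degree P \<le> 4 \<and>
     (\<forall>w. cmod w = 1 \<longrightarrow> Im (\<Sum>i\<in>UNIV. cnj (dd s1 s2 w i) * x$i$i) = 0 \<longrightarrow> poly P w = 0)"
proof -
  define d where "d = dd s1 s2"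
  note d0 = d_def
  have d_def: "d w i = (if i = None then cnj w ^ 2 else if i = Some s1 \<or> i = Some s2 then w else 1)" for w i
    by (simp add: d0 dd_def)
  define a where "a i = x$i$i" for i
  define p where "p i = (if i = None then [:- cnj (a i), 0, 0, 0, a i:]
      else if i = Some s1 \<or> i = Some s2 then [:0, a i, 0, - cnj (a i):] else [:0, 0, a i - cnj (a i):])" for i
  define P where "P = (\<Sum>i\<in>UNIV. p i)"
  have "coeff P 4 = (\<Sum>i\<in>UNIV. coeff (p i) 4)" by (simp add: P_def coeff_sum)
  also have "\<dots> = (\<Sum>i\<in>(UNIV::'m option set). if i = None then a None else 0)"
    by (intro sum.cong refl) (auto simp: p_def numeral_eq_Suc)
  also have "\<dots> = a None" by simp
  finally have c4: "coeff P 4 = x$None$None" by (simp add: a_def)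
  then have P0: "P \<noteq> 0" using x0 by auto
  have deg: "degree P \<le> 4"
    unfolding P_def
  proof (rule degree_sum_le)
    fix i show "degree (p i) \<le> 4"
      by (auto simp: p_def degree_pCons_eq_if)
  qed simp
  have roots: "poly P w = 0" if w1: "cmod w = 1" and im: "Im (\<Sum>i\<in>UNIV. cnj (d w i) * x$i$i) = 0" for w
  proof -
    have ww: "cnj w * w = 1" using w1 by (metis complex_norm_square mult.commute of_real_1 power_one)
    have each: "poly (p i) w = w^2 * (cnj (d w i) * a i - cnj (cnj (d w i) * a i))" for i
    proof -
      have ww2: "w^2 * cnj w ^ 2 = 1" using ww by (metis mult.commute power_mult_distrib power_one)
      show ?thesis
      proof (cases "i = None")
        case True
        have "w ^ 2 * (w ^ 2 * a i - cnj w ^ 2 * cnj (a i)) = w^4 * a i - (w^2 * cnj w ^ 2) * cnj (a i)"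
          by (simp add: algebra_simps power2_eq_square power4_eq_xxxx)
        then show ?thesis using True ww2 by (simp add: p_def d_def algebra_simps power2_eq_square power4_eq_xxxx)
      next
        case False
        show ?thesis
        proof (cases "i = Some s1 \<or> i = Some s2")
          case True
          have pi: "p i = [:0, a i, 0, - cnj (a i):]" and di: "d w i = w" using True False by (auto simp: p_def d_def)
          have "w ^ 2 * (cnj w * a i - w * cnj (a i)) = (w * cnj w) * w * a i - w^3 * cnj (a i)"
            by (simp add: algebra_simps power2_eq_square power3_eq_cube)
          also have "\<dots> = poly (p i) w" using ww by (simp add: pi algebra_simps power3_eq_cube)
          finally show ?thesis by (simp add: di)
        next
          case F2: False
          have pi: "p i = [:0, 0, a i - cnj (a i):]" and di: "d w i = 1" using F2 False by (auto simp: p_def d_def)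
          show ?thesis by (simp add: pi di algebra_simps power2_eq_square)
        qed
      qed
    qed
    define T where "T = (\<Sum>i\<in>UNIV. cnj (d w i) * a i)"
    have "Im T = 0" using im by (simp add: T_def a_def)
    then have "cnj T = T" by (simp add: complex_eq_iff)
    have "poly P w = (\<Sum>i\<in>UNIV. w^2 * (cnj (d w i) * a i - cnj (cnj (d w i) * a i)))"
      by (simp add: P_def poly_sum each)
    also have "\<dots> = w^2 * (T - cnj T)"
      by (simp add: T_def cnj_sum sum_subtractf[symmetric] sum_distrib_left)
    also have "\<dots> = 0" using \<open>cnj T = T\<close> by simp
    finally show ?thesis .
  qed
  show ?thesis unfolding d0[symmetric]
    by (intro exI[of _ P] conjI P0 deg allI impI roots)
qed

lemma cmod_dd:
  assumes "cmod w = 1"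
  shows "cmod (dd s1 s2 w i) = 1"
  using assms by (simp add: dd_def norm_power)

lemma wk_inj: "inj (\<lambda>k::nat. cis (1 / real (Suc k)))"
proof (rule injI)
  fix k l :: nat
  assume "cis (1 / real (Suc k)) = cis (1 / real (Suc l))"
  then have c: "cos (1 / real (Suc k)) = cos (1 / real (Suc l))"
    by (metis cis.sel(1))
  have a1: "1 / real (Suc k) \<le> 1" "1 / real (Suc l) \<le> 1" by simp_all
  have a2: "0 \<le> 1 / real (Suc k)" "0 \<le> 1 / real (Suc l)" by simp_all
  have p: "1 \<le> pi" using pi_gt3 by linarith
  have "1 / real (Suc k) = 1 / real (Suc l)"
    by (rule cos_inj_pi[OF a2(1) order_trans[OF a1(1) p] a2(2) order_trans[OF a1(2) p] c])
  then show "k = l" by simp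
qed

theorem corollary4p3:
  fixes \<mu> :: "((complex^('m::finite option)^('m option)) \<times> (complex^('m option)^('m option))) measure"
  assumes "CARD('m) \<ge> 2"
    and "haar_measure pair_mult (SU_n1 \<times> SU_n1) \<mu>"
  shows "haar_null \<mu> {(g1, g2). g1 \<in> SU_n1 \<and> g2 \<in> SU_n1 \<and>
                                 strongly_doubly_reversible SU_n1 g1 g2}"
proof -
  let ?H = "SU_n1 \<times> SU_n1 :: ((complex^('m option)^('m option)) \<times> (complex^('m option)^('m option))) set"
  note HM = assms(2)[unfolded haar_measure_def]
  have sets: "sets \<mu> = sets borel" using HM by (elim conjE)
  have cfin: "\<And>K. compact K \<Longrightarrow> emeasure \<mu> K < \<infinity>" using HM by (elim conjE) blast
  have inv: "\<And>g A. g \<in> ?H \<Longrightarrow> A \<in> sets borel \<Longrightarrow> A \<subseteq> ?H \<Longrightarrow> emeasure \<mu> (pair_mult g ` A) = emeasure \<mu> A"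
    using HM by (elim conjE) blast
  have "\<not> card (UNIV::'m set) \<le> Suc 0" using assms(1) by simp
  then obtain s1 s2 :: 'm where s12: "s1 \<noteq> s2"
    using card_le_Suc0_iff_eq[of "UNIV::'m set"] by auto
  define Q where "Q = {p. p \<in> ?H \<and> Im (trace (fst p)) = 0}"
  define Bj where "Bj j = Q \<inter> cball 0 (real j)" for j :: nat
  have "Q = ?H \<inter> {p. Im (trace (fst p)) = 0}" by (auto simp: Q_def)
  moreover have "closed ?H" by (intro closed_Times closed_SU)
  moreover have "closed {p::(complex^('m option)^('m option)) \<times> (complex^('m option)^('m option)). Im (trace (fst p)) = 0}"
    unfolding trace_def
    by (intro closed_Collect_eq continuous_on_Im continuous_on_sum continuous_on_component continuous_on_fst continuous_on_id continuous_on_const)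
  ultimately have closedQ: "closed Q" by (simp add: closed_Int)
  have compB: "compact (Bj j)" for j
    unfolding Bj_def by (intro closed_Int_compact closedQ compact_cball)
  have Bsets: "Bj j \<in> sets borel" for j using compB by (simp add: borel_compact)
  have BH: "Bj j \<subseteq> ?H" for j by (auto simp: Bj_def Q_def)
  have zero: "emeasure \<mu> (Bj j) = 0" for j
  proof -
    define wk where "wk k = cis (1 / real (Suc k))" for k :: nat
    define g where "g k = (dg (dd s1 s2 (wk k)), mat 1 :: complex^('m option)^('m option))" for k
    define A where "A k = pair_mult (g k) ` Bj j" for k
    have wk1: "cmod (wk k) = 1" for k by (simp add: wk_def)
    have d1: "cmod (dd s1 s2 (wk k) i) = 1" for k i using wk1 by (rule cmod_dd)
    have gH: "g k \<in> ?H" for k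
      using dg_SU[OF d1 prod_d[OF s12 wk1]] one_SU by (simp add: g_def)
    have eqm: "emeasure \<mu> (A k) = emeasure \<mu> (Bj j)" for k
      unfolding A_def by (rule inv[OF gH Bsets BH])
    have Asets: "A k \<in> sets \<mu>" for k
    proof -
      have "compact (A k)" unfolding A_def by (rule compact_continuous_image[OF cont_pm compB])
      then show ?thesis by (simp add: sets borel_compact)
    qed
    have AC: "A k \<subseteq> cball 0 (real j)" for k
    proof
      fix x assume "x \<in> A k"
      then obtain y where y: "y \<in> Bj j" "x = pair_mult (g k) y" by (auto simp: A_def)
      have "norm x = norm y"
        using y(2) by (cases y) (simp add: pair_mult_def g_def norm_Pair norm_dg[OF d1])
      then show "x \<in> cball 0 (real j)" using y(1) by (simp add: Bj_def)
    qed
    have Cs: "cball 0 (real j) \<in> sets \<mu>" by (simp add: sets)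
    have Cf: "emeasure \<mu> (cball 0 (real j)) < \<infinity>" by (rule cfin[OF compact_cball])
    have key: "fst x $ None $ None \<noteq> 0 \<and> Im (\<Sum>i\<in>UNIV. cnj (dd s1 s2 (wk k) i) * fst x $ i $ i) = 0"
      if xA: "x \<in> A k" for x k
    proof -
      obtain y where y: "y \<in> Bj j" "x = pair_mult (g k) y" using xA unfolding A_def by blast
      then have x1: "fst x = dg (dd s1 s2 (wk k)) ** fst y" by (simp add: pair_mult_def g_def)
      have ySU: "fst y \<in> SU_n1" and ytr: "Im (trace (fst y)) = 0" using y(1) by (auto simp: Bj_def Q_def)
      have ent: "fst x $ i $ i = dd s1 s2 (wk k) i * fst y $ i $ i" for i by (simp add: x1 dg_mult_left)
      have u: "cnj (dd s1 s2 (wk k) i) * dd s1 s2 (wk k) i = 1" for i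
        using d1[of k i] by (metis complex_norm_square mult.commute of_real_1 power_one)
      have ent2: "fst y $ i $ i = cnj (dd s1 s2 (wk k) i) * fst x $ i $ i" for i
        by (simp add: ent mult.assoc[symmetric] u)
      have "trace (fst y) = (\<Sum>i\<in>UNIV. cnj (dd s1 s2 (wk k) i) * fst x $ i $ i)"
        by (simp add: trace_def ent2)
      moreover have "dd s1 s2 (wk k) None \<noteq> 0" using d1[of k None] by auto
      then have "fst x $ None $ None \<noteq> 0" using corner[OF ySU] by (simp add: ent)
      ultimately show ?thesis using ytr by simp
    qed
    have counting: "finite {k. x \<in> A k} \<and> card {k. x \<in> A k} \<le> 4" for x
    proof (cases "\<exists>k. x \<in> A k")
      case False then show ?thesis by simp
    next
      case True
      then obtain k0 where "x \<in> A k0" by blast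
      then have "fst x $ None $ None \<noteq> 0" using key by blast
      from root_poly[OF this, of s1 s2] obtain P :: "complex poly" where
        P: "P \<noteq> 0" "degree P \<le> 4"
        "\<And>w. cmod w = 1 \<Longrightarrow> Im (\<Sum>i\<in>UNIV. cnj (dd s1 s2 w i) * fst x $ i $ i) = 0 \<Longrightarrow> poly P w = 0"
        by blast
      have sub: "wk ` {k. x \<in> A k} \<subseteq> {z. poly P z = 0}"
        using key P(3) wk1 by blast
      have injw: "inj wk" using wk_inj by (simp add: wk_def[abs_def])
      have finR: "finite {z. poly P z = 0}" by (rule poly_roots_finite[OF P(1)])
      have "finite {k. x \<in> A k}"
        by (rule finite_imageD[OF finite_subset[OF sub finR]]) (use injw in \<open>simp add: inj_on_def\<close>)
      moreover have "card {k. x \<in> A k} \<le> card {z. poly P z = 0}"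
        by (rule card_inj_on_le[OF _ sub finR]) (use injw in \<open>simp add: inj_on_def\<close>)
      moreover have "card {z. poly P z = 0} \<le> 4"
        using card_poly_roots_bound[OF P(1)] P(2) by linarith
      ultimately show ?thesis by linarith
    qed
    show ?thesis
    proof (rule null_by_translates[of A \<mu> "cball 0 (real j)" "emeasure \<mu> (Bj j)" 4])
      show "\<And>k. A k \<in> sets \<mu>" by (rule Asets)
      show "\<And>k. A k \<subseteq> cball 0 (real j)" by (rule AC)
      show "cball 0 (real j) \<in> sets \<mu>" by (rule Cs)
      show "emeasure \<mu> (cball 0 (real j)) < \<infinity>" by (rule Cf)
      show "\<And>k. emeasure \<mu> (A k) = emeasure \<mu> (Bj j)" by (rule eqm)
      show "\<And>x. finite {k. x \<in> A k}" using counting by blast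
      show "\<And>x. card {k. x \<in> A k} \<le> 4" using counting by blast
    qed
  qed
  have Qeq: "Q = (\<Union>j. Bj j)"
  proof
    show "Q \<subseteq> (\<Union>j. Bj j)"
    proof
      fix p assume "p \<in> Q"
      obtain n :: nat where "norm p \<le> real n" using real_arch_simple by blast
      then show "p \<in> (\<Union>j. Bj j)" using \<open>p \<in> Q\<close> by (auto simp: Bj_def)
    qed
  qed (auto simp: Bj_def)
  have Qsets: "Q \<in> sets \<mu>" using closedQ by (simp add: sets borel_closed)
  have Q0: "emeasure \<mu> Q = 0"
    unfolding Qeq by (rule emeasure_UN_eq_0) (use zero Bsets sets in auto)
  have sub: "{(g1, g2). g1 \<in> SU_n1 \<and> g2 \<in> SU_n1 \<and> strongly_doubly_reversible SU_n1 g1 g2} \<subseteq> Q"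
    using rev_trace by (auto simp: Q_def)
  show ?thesis unfolding haar_null_def using Qsets Q0 sub by blast
qed

end
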